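(* Let $\epsilon>0$ and $\delta\in(0,1)$, and set $\delta'=\delta+e^{\epsilon}Q(\sqrt{2\epsilon})$; assume $\delta'<1$. For $x\in(0,1)$ let $\mathcal{R}_\epsilon(x)=\sqrt{(Q^{-1}(x))^2+2\epsilon}-Q^{-1}(x)$. Then the function $\mathcal{B}_{\epsilon,\delta}(\mu)=Q\!\left(\tfrac{\epsilon}{\mu}-\tfrac{\mu}{2}\right)-e^{\epsilon}Q\!\left(\tfrac{\epsilon}{\mu}+\tfrac{\mu}{2}\right)-\delta$ satisfies $\mathcal{B}_{\epsilon,\delta}(\mathcal{R}_\epsilon(\delta))\le 0\le \mathcal{B}_{\epsilon,\delta}(\mathcal{R}_\epsilon(\delta'))$; consequently, any $\mu_0>0$ with $\mathcal{B}_{\epsilon,\delta}(\mu_0)=0$ lies in the interval $[\mathcal{R}_\epsilon(\delta),\mathcal{R}_\epsilon(\delta')]$, and such a $\mu_0$ exists in this interval.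
   Context: $Q(\cdot)$ denotes the survival function of the standard normal distribution, $Q(x)=\mathbb{P}\{Z>x\}$, $Z\sim\mathcal{N}(0,1)$, and $Q^{-1}$ its inverse on $(0,1)$. *)

theory Defs
  imports "HOL-Probability.Probability"
begin

definition Qf :: "real \<Rightarrow> real" where
  "Qf x = measure (density lborel std_normal_density) {x<..}"

text \<open>Inverse of Q on (0,1).\<close>
definition Qinv :: "real \<Rightarrow> real" where
  "Qinv y = (THE x. Qf x = y)"

definition Rfun :: "real \<Rightarrow> real \<Rightarrow> real" where
  "Rfun \<epsilon> x = sqrt ((Qinv x)\<^sup>2 + 2 * \<epsilon>) - Qinv x"

definition Bfun :: "real \<Rightarrow> real \<Rightarrow> real \<Rightarrow> real" where
  "Bfun \<epsilon> \<delta> \<mu> = Qf (\<epsilon> / \<mu> - \<mu> / 2) - exp \<epsilon> * Qf (\<epsilon> / \<mu> + \<mu> / 2) - \<delta>"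

end

theory Submission imports Defs begin

abbreviation "NM \<equiv> density lborel std_normal_density"

lemma NM_prob: "prob_space NM" by (rule prob_space_normal_density, simp)

lemma NM_real: "real_distribution NM"
proof -
  interpret prob_space NM by (rule NM_prob)
  show ?thesis by unfold_locales simp
qed

lemma Qf_nonneg: "0 \<le> Qf x" unfolding Qf_def by simp

lemma Qf_cdf: "Qf x = 1 - cdf NM x"
proof -
  interpret real_distribution NM by (rule NM_real)
  have "{x<..} = space NM - {..x}" by auto
  then show ?thesis using prob_compl[of "{..x}"] unfolding Qf_def cdf_def by simp
qed

lemma meas_Ioc: assumes "a \<le> u" shows "measure NM {a<..u} = integral {a..u} std_normal_density"
proof -
  have c: "continuous_on {a..u} std_normal_density"
    unfolding std_normal_density_def by (intro continuous_intros) auto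
  have h: "(std_normal_density has_integral integral {a..u} std_normal_density) {a..u}"
    using integrable_continuous_real[OF c] by (simp add: has_integral_integral)
  have "(std_normal_density has_integral integral {a..u} std_normal_density) {a<..u}"
  proof (subst has_integral_spike_set_eq)
    have "{x \<in> {a<..u} - {a..u}. std_normal_density x \<noteq> 0} = {}" by auto
    then show "negligible {x \<in> {a<..u} - {a..u}. std_normal_density x \<noteq> 0}" by (metis negligible_empty)
    have "{x \<in> {a..u} - {a<..u}. std_normal_density x \<noteq> 0} \<subseteq> {a}" by auto
    then show "negligible {x \<in> {a..u} - {a<..u}. std_normal_density x \<noteq> 0}"
      using negligible_subset negligible_sing by blast
  qed (rule h)
  then have "integral\<^sup>N lborel (\<lambda>x. ennreal (std_normal_density x) * indicator {a<..u} x) = ennreal (integral {a..u} std_normal_density)"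
    by (intro nn_integral_has_integral_lebesgue') auto
  then have "emeasure NM {a<..u} = ennreal (integral {a..u} std_normal_density)"
    by (subst emeasure_density) auto
  moreover have "0 \<le> integral {a..u} std_normal_density"
    using integral_nonneg[OF integrable_continuous_real[OF c]] by simp
  ultimately show ?thesis unfolding measure_def by simp
qed

lemma Qf_diff: assumes "a \<le> u" shows "Qf u = Qf a - integral {a..u} std_normal_density"
proof -
  interpret prob_space NM by (rule NM_prob)
  have e: "{a<..} = {a<..u} \<union> {u<..}" using assms by auto
  have "measure NM ({a<..u} \<union> {u<..}) = measure NM {a<..u} + measure NM {u<..}"
    by (rule finite_measure_Union) auto
  then have "measure NM {a<..} = measure NM {a<..u} + measure NM {u<..}" by (simp only: e)
  then show ?thesis using meas_Ioc[OF assms] unfolding Qf_def by simp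
qed

lemma Qf_deriv: "(Qf has_real_derivative - std_normal_density x) (at x)"
proof -
  have c: "continuous_on {x-1..x+1} std_normal_density"
    unfolding std_normal_density_def by (intro continuous_intros) auto
  have "((\<lambda>u. integral {x-1..u} std_normal_density) has_real_derivative std_normal_density x) (at x within {x-1..x+1})"
    by (rule integral_has_real_derivative[OF c]) auto
  then have "((\<lambda>u. integral {x-1..u} std_normal_density) has_real_derivative std_normal_density x) (at x)"
    by (simp add: at_within_Icc_at)
  then have "((\<lambda>u. Qf (x-1) - integral {x-1..u} std_normal_density) has_real_derivative - std_normal_density x) (at x)"
    by (intro derivative_eq_intros) auto
  then show ?thesis
    by (rule has_field_derivative_transform_within_open[where S="{x-1<..<x+1}"])
       (auto simp: Qf_diff[symmetric])
qed

lemma Qf_cont: "isCont Qf x" using Qf_deriv DERIV_isCont by blast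

lemma Qf_negd: "\<exists>y. DERIV Qf x :> y \<and> y < 0"
  using Qf_deriv[of x] normal_density_pos[of 1 0 x] by auto

lemma Qf_strict: "a < b \<Longrightarrow> Qf b < Qf a"
  using DERIV_neg_imp_decreasing[of a b Qf] Qf_negd by blast

lemma Qf_mono: "a \<le> b \<Longrightarrow> Qf b \<le> Qf a"
  using Qf_strict by (cases "a = b") (auto simp: less_imp_le order.order_iff_strict)

lemma Qf_top: "(Qf \<longlongrightarrow> 0) at_top"
proof -
  have "((\<lambda>x. 1 - cdf NM x) \<longlongrightarrow> 1 - 1) at_top"
    by (rule tendsto_diff[OF tendsto_const real_distribution.cdf_lim_at_top_prob[OF NM_real]])
  moreover have "(\<lambda>x. 1 - cdf NM x) = Qf" by (simp add: Qf_cdf[abs_def])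
  ultimately show ?thesis by simp
qed

lemma Qf_bot: "(Qf \<longlongrightarrow> 1) at_bot"
proof -
  have "((\<lambda>x. 1 - cdf NM x) \<longlongrightarrow> 1 - 0) at_bot"
    by (rule tendsto_diff[OF tendsto_const finite_borel_measure.cdf_lim_at_bot[OF real_distribution.finite_borel_measure_M[OF NM_real]]])
  moreover have "(\<lambda>x. 1 - cdf NM x) = Qf" by (simp add: Qf_cdf[abs_def])
  ultimately show ?thesis by simp
qed

lemma Qf_Qinv: assumes "0 < y" "y < 1" shows "Qf (Qinv y) = y"
proof -
  have "eventually (\<lambda>x. Qf x < y) at_top" using Qf_top assms order_tendstoD(2) by blast
  then obtain b where b: "Qf b < y" by (auto simp: eventually_at_top_linorder)
  have "eventually (\<lambda>x. Qf x > y) at_bot" using Qf_bot assms order_tendstoD(1) by blast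
  then obtain a where a: "Qf a > y" by (auto simp: eventually_at_bot_linorder)
  have ab: "a \<le> b" using a b Qf_mono[of b a] by (cases "a \<le> b") auto
  obtain x where x: "Qf x = y" using IVT2[of Qf b y a, OF _ _ ab] a b Qf_cont by force
  have uq: "z = x" if "Qf z = y" for z
  proof (rule ccontr)
    assume "z \<noteq> x"
    then consider "z < x" | "x < z" by linarith
    then show False using Qf_strict[of z x] Qf_strict[of x z] that \<open>Qf x = y\<close> by cases auto
  qed
  have "Qinv y = x" unfolding Qinv_def by (rule the_equality) (rule x, erule uq)
  then show ?thesis using \<open>Qf x = y\<close> by simp
qed


lemma phi_rel:
  fixes e m :: real assumes "m > 0"
  shows "exp e * std_normal_density (e/m + m/2) = std_normal_density (e/m - m/2)"
proof -
  have "e + - (e/m + m/2)\<^sup>2 / 2 = - (e/m - m/2)\<^sup>2 / 2"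
    using assms by (simp add: power2_eq_square field_simps)
  then have "exp e * exp (- (e/m + m/2)\<^sup>2 / 2) = exp (- (e/m - m/2)\<^sup>2 / 2)"
    by (metis exp_add)
  then show ?thesis unfolding std_normal_density_def by (metis mult.left_commute)
qed

lemma B_deriv:
  fixes e d m :: real assumes "m > 0"
  shows "(Bfun e d has_real_derivative std_normal_density (e/m - m/2)) (at m)"
proof -
  have i1: "((\<lambda>m. e/m - m/2) has_real_derivative (- e / m^2 - 1/2)) (at m)"
    using assms by (auto intro!: derivative_eq_intros simp: field_simps power2_eq_square)
  have i2: "((\<lambda>m. e/m + m/2) has_real_derivative (- e / m^2 + 1/2)) (at m)"
    using assms by (auto intro!: derivative_eq_intros simp: field_simps power2_eq_square)
  have d1: "((\<lambda>m. Qf (e/m - m/2)) has_real_derivative (- std_normal_density (e/m - m/2)) * (- e / m^2 - 1/2)) (at m)"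
    using DERIV_chain2[OF Qf_deriv i1] .
  have d2: "((\<lambda>m. Qf (e/m + m/2)) has_real_derivative (- std_normal_density (e/m + m/2)) * (- e / m^2 + 1/2)) (at m)"
    using DERIV_chain2[OF Qf_deriv i2] .
  have "((\<lambda>m. Qf (e/m - m/2) - exp e * Qf (e/m + m/2) - d) has_real_derivative
     (- std_normal_density (e/m - m/2)) * (- e / m^2 - 1/2) - exp e * ((- std_normal_density (e/m + m/2)) * (- e / m^2 + 1/2)) - 0) (at m)"
    by (intro DERIV_diff DERIV_cmult d1 d2 DERIV_const)
  moreover have "(- std_normal_density (e/m - m/2)) * (- e / m^2 - 1/2) - exp e * ((- std_normal_density (e/m + m/2)) * (- e / m^2 + 1/2)) - 0
      = std_normal_density (e/m - m/2)"
    using phi_rel[OF assms, of e] by (simp add: algebra_simps)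
  ultimately show ?thesis unfolding Bfun_def[abs_def] by simp
qed

lemma B_strict:
  fixes e d a b :: real assumes "0 < a" "a < b"
  shows "Bfun e d a < Bfun e d b"
proof -
  have "\<And>x. a \<le> x \<Longrightarrow> x \<le> b \<Longrightarrow> \<exists>y. DERIV (Bfun e d) x :> y \<and> y > 0"
    using assms B_deriv normal_density_pos by (metis order_less_le_trans zero_less_one)
  then show ?thesis using DERIV_pos_imp_increasing[of a b "Bfun e d"] assms by blast
qed

lemma R_props:
  fixes e q :: real assumes "e > 0"
  defines "m \<equiv> sqrt (q\<^sup>2 + 2*e) - q"
  shows "m > 0" "e/m - m/2 = q" "e/m + m/2 = sqrt (q\<^sup>2 + 2*e)"
proof -
  define s where "s = sqrt (q\<^sup>2 + 2*e)"
  have s2: "s\<^sup>2 = q\<^sup>2 + 2*e" unfolding s_def using assms by (simp add: add_nonneg_nonneg)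
  have "\<bar>q\<bar> < s" unfolding s_def using assms
    by (metis real_sqrt_abs real_sqrt_less_mono less_add_same_cancel1 mult_pos_pos zero_less_numeral)
  then have sq: "q < s" by simp
  then show mp: "m > 0" unfolding m_def s_def[symmetric] by simp
  have ee: "e = (s - q) * (s + q) / 2" using s2 by (simp add: power2_eq_square algebra_simps)
  have ms: "m = s - q" by (simp add: m_def s_def)
  have "e / m = (s + q)/2" unfolding ms using sq by (subst ee) (simp add: field_simps)
  then show "e/m - m/2 = q" "e/m + m/2 = sqrt (q\<^sup>2 + 2*e)"
    unfolding ms s_def[symmetric] by (simp_all add: field_simps)
qed

lemma B_at_R:
  fixes e d x :: real assumes "e > 0" "0 < x" "x < 1"
  shows "Rfun e x > 0" "Bfun e d (Rfun e x) = x - exp e * Qf (sqrt ((Qinv x)\<^sup>2 + 2*e)) - d"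
  using R_props[OF assms(1), of "Qinv x"] Qf_Qinv[OF assms(2,3)]
  unfolding Rfun_def Bfun_def by auto

theorem mainTheorem3:
  fixes \<epsilon> \<delta> \<delta>' :: real
  assumes "\<epsilon> > 0" and "0 < \<delta>" and "\<delta> < 1"
    and "\<delta>' = \<delta> + exp \<epsilon> * Qf (sqrt (2 * \<epsilon>))"
    and "\<delta>' < 1"
  shows "Bfun \<epsilon> \<delta> (Rfun \<epsilon> \<delta>) \<le> 0 \<and> 0 \<le> Bfun \<epsilon> \<delta> (Rfun \<epsilon> \<delta>')
    \<and> (\<forall>\<mu>0 > 0. Bfun \<epsilon> \<delta> \<mu>0 = 0 \<longrightarrow> Rfun \<epsilon> \<delta> \<le> \<mu>0 \<and> \<mu>0 \<le> Rfun \<epsilon> \<delta>')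
    \<and> (\<exists>\<mu>0 > 0. Rfun \<epsilon> \<delta> \<le> \<mu>0 \<and> \<mu>0 \<le> Rfun \<epsilon> \<delta>' \<and> Bfun \<epsilon> \<delta> \<mu>0 = 0)"
proof -
  have "0 \<le> exp \<epsilon> * Qf (sqrt (2*\<epsilon>))" using Qf_nonneg[of "sqrt (2*\<epsilon>)"] by simp
  then have d'pos: "0 < \<delta>'" using assms(2,4) by linarith
  have B1: "Bfun \<epsilon> \<delta> (Rfun \<epsilon> \<delta>) \<le> 0"
    using B_at_R(2)[OF assms(1,2,3), of \<delta>] Qf_nonneg[of "sqrt ((Qinv \<delta>)\<^sup>2 + 2*\<epsilon>)"] by simp
  have "sqrt (2*\<epsilon>) \<le> sqrt ((Qinv \<delta>')\<^sup>2 + 2*\<epsilon>)" by simp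
  then have "Qf (sqrt ((Qinv \<delta>')\<^sup>2 + 2*\<epsilon>)) \<le> Qf (sqrt (2*\<epsilon>))" by (rule Qf_mono)
  then have "exp \<epsilon> * Qf (sqrt ((Qinv \<delta>')\<^sup>2 + 2*\<epsilon>)) \<le> exp \<epsilon> * Qf (sqrt (2*\<epsilon>))"
    by (rule mult_left_mono) simp
  then have B2: "0 \<le> Bfun \<epsilon> \<delta> (Rfun \<epsilon> \<delta>')"
    using B_at_R(2)[OF assms(1) d'pos assms(5), of \<delta>] assms(4) by linarith
  have p1: "Rfun \<epsilon> \<delta> > 0" using B_at_R(1)[OF assms(1,2,3)] .
  have p2: "Rfun \<epsilon> \<delta>' > 0" using B_at_R(1)[OF assms(1) d'pos assms(5)] .
  have C: "Rfun \<epsilon> \<delta> \<le> \<mu>0 \<and> \<mu>0 \<le> Rfun \<epsilon> \<delta>'" if "\<mu>0 > 0" "Bfun \<epsilon> \<delta> \<mu>0 = 0" for \<mu>0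
  proof
    show "Rfun \<epsilon> \<delta> \<le> \<mu>0"
    proof (rule ccontr)
      assume "\<not> ?thesis"
      then have "Bfun \<epsilon> \<delta> \<mu>0 < Bfun \<epsilon> \<delta> (Rfun \<epsilon> \<delta>)" using B_strict that(1) by simp
      then show False using B1 that(2) by simp
    qed
    show "\<mu>0 \<le> Rfun \<epsilon> \<delta>'"
    proof (rule ccontr)
      assume "\<not> ?thesis"
      then have "Bfun \<epsilon> \<delta> (Rfun \<epsilon> \<delta>') < Bfun \<epsilon> \<delta> \<mu>0" using B_strict p2 by simp
      then show False using B2 that(2) by simp
    qed
  qed
  have le: "Rfun \<epsilon> \<delta> \<le> Rfun \<epsilon> \<delta>'"
  proof (rule ccontr)
    assume "\<not> ?thesis"
    then have "Bfun \<epsilon> \<delta> (Rfun \<epsilon> \<delta>') < Bfun \<epsilon> \<delta> (Rfun \<epsilon> \<delta>)" using B_strict p2 by simp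
    then show False using B1 B2 by simp
  qed
  have cont: "\<forall>x. Rfun \<epsilon> \<delta> \<le> x \<and> x \<le> Rfun \<epsilon> \<delta>' \<longrightarrow> isCont (Bfun \<epsilon> \<delta>) x"
    using p1 B_deriv DERIV_isCont by (metis order_less_le_trans)
  obtain x where x: "Rfun \<epsilon> \<delta> \<le> x" "x \<le> Rfun \<epsilon> \<delta>'" "Bfun \<epsilon> \<delta> x = 0"
    using IVT[of "Bfun \<epsilon> \<delta>" "Rfun \<epsilon> \<delta>" 0 "Rfun \<epsilon> \<delta>'", OF B1 B2 le cont] by blast
  have "x > 0" using x p1 by simp
  show ?thesis using B1 B2 C x \<open>x > 0\<close> by blast
qed

end
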